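(* Let $a,b\in E_{d+1}$ be linearly independent and satisfy $(a,a)=(b,b)=(a,b)=0$. Then $d+1\ge4$, and there is a $\Lambda\in G_0$ such that $\Lambda a=e_0+e_1$ and $\Lambda b=\pm(\varepsilon e_{d-1}+e_d)$, where $\varepsilon=\pm1$. Moreover, any $x\in E_{d+1}$ such that $(x,a)=(x,b)=(x,x)=0$ is a linear combination of $a$ and $b$.
   Context: Let $d\ge1$. $E_{d+1}=\mathbb R^{d+1}$ with the bilinear form $(x,y)=x^0y^0+x^dy^d-\sum_{j=1}^{d-1}x^jy^j$ and canonical basis $e_0,\dots,e_d$. $G_0$ is the connected component of the identity of the group of real linear maps of $E_{d+1}$ preserving this form. *)

theory Defs
  imports "HOL-Analysis.Analysis"
begin

text \<open>E_{d+1} = R^{d+1} is represented by functions nat => real vanishing above index d;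
  linear maps of E_{d+1} by (d+1)x(d+1) matrices nat => nat => real vanishing outside
  {0..d} x {0..d}. The space of such matrices carries the product topology
  (Function_Topology), which on this finite-dimensional block is the Euclidean one.\<close>

definition Evec :: "nat \<Rightarrow> (nat \<Rightarrow> real) set" where
  "Evec d = {x. \<forall>i>d. x i = 0}"

definition Emat :: "nat \<Rightarrow> (nat \<Rightarrow> nat \<Rightarrow> real) set" where
  "Emat d = {M. \<forall>i j. (d < i \<or> d < j) \<longrightarrow> M i j = 0}"

definition mapply :: "nat \<Rightarrow> (nat \<Rightarrow> nat \<Rightarrow> real) \<Rightarrow> (nat \<Rightarrow> real) \<Rightarrow> (nat \<Rightarrow> real)" where
  "mapply d M x = (\<lambda>i. \<Sum>j\<le>d. M i j * x j)"

definition idmat :: "nat \<Rightarrow> (nat \<Rightarrow> nat \<Rightarrow> real)" where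
  "idmat d = (\<lambda>i j. if i = j \<and> i \<le> d then 1 else 0)"

definition bform :: "nat \<Rightarrow> (nat \<Rightarrow> real) \<Rightarrow> (nat \<Rightarrow> real) \<Rightarrow> real" where
  "bform d x y = x 0 * y 0 + x d * y d - (\<Sum>j\<in>{1..<d}. x j * y j)"

definition basis_e :: "nat \<Rightarrow> (nat \<Rightarrow> real)" where
  "basis_e k = (\<lambda>j. if j = k then 1 else 0)"

definition Ogroup :: "nat \<Rightarrow> (nat \<Rightarrow> nat \<Rightarrow> real) set" where
  "Ogroup d = {M \<in> Emat d. \<forall>x\<in>Evec d. \<forall>y\<in>Evec d.
                 bform d (mapply d M x) (mapply d M y) = bform d x y}"

definition G0 :: "nat \<Rightarrow> (nat \<Rightarrow> nat \<Rightarrow> real) set" where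
  "G0 d = connected_component_set (Ogroup d) (idmat d)"

end

theory Submission
  imports Defs
begin


definition eta :: "nat \<Rightarrow> nat \<Rightarrow> real" where
  "eta d j = (if j = 0 \<or> j = d then 1 else -1)"

lemma bform_sym: "bform d x y = bform d y x"
  unfolding bform_def by (simp add: mult.commute)

lemma bform_lin_l: "bform d (\<lambda>i. \<alpha> * x i + \<beta> * y i) z = \<alpha> * bform d x z + \<beta> * bform d y z"
  unfolding bform_def by (simp add: algebra_simps sum.distrib sum_distrib_left)

lemma bform_lin_r: "bform d z (\<lambda>i. \<alpha> * x i + \<beta> * y i) = \<alpha> * bform d z x + \<beta> * bform d z y"
  by (metis bform_sym bform_lin_l)

lemma bform_add_l: "bform d (\<lambda>i. x i + y i) z = bform d x z + bform d y z"
  using bform_lin_l[of d 1 x 1 y z] by simp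
lemma bform_add_r: "bform d z (\<lambda>i. x i + y i) = bform d z x + bform d z y"
  using bform_lin_r[of d z 1 x 1 y] by simp
lemma bform_scale_l: "bform d (\<lambda>i. c * x i) z = c * bform d x z"
  using bform_lin_l[of d c x 0 x z] by simp
lemma bform_scale_r: "bform d z (\<lambda>i. c * x i) = c * bform d z x"
  using bform_lin_r[of d z c x 0 x] by simp
lemma bform_diff_l: "bform d (\<lambda>i. x i - y i) z = bform d x z - bform d y z"
  using bform_lin_l[of d 1 x "-1" y z] by simp
lemma bform_diff_r: "bform d z (\<lambda>i. x i - y i) = bform d z x - bform d z y"
  using bform_lin_r[of d z 1 x "-1" y] by simp
lemma bform_zero_l[simp]: "bform d (\<lambda>i. 0) z = 0"
  unfolding bform_def by simp
lemma bform_zero_r[simp]: "bform d z (\<lambda>i. 0) = 0"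
  unfolding bform_def by simp

lemma bform_expand:
  assumes "d \<ge> 1"
  shows "bform d x y = (\<Sum>j\<le>d. eta d j * x j * y j)"
proof -
  have "{..d} = insert 0 (insert d {1..<d})" using assms by auto
  then have "(\<Sum>j\<le>d. eta d j * x j * y j) = eta d 0 * x 0 * y 0 + eta d d * x d * y d
      + (\<Sum>j\<in>{1..<d}. eta d j * x j * y j)"
    using assms by (simp add: sum.insert)
  also have "(\<Sum>j\<in>{1..<d}. eta d j * x j * y j) = - (\<Sum>j\<in>{1..<d}. x j * y j)"
    by (simp add: eta_def sum_negf[symmetric])
  finally show ?thesis using assms unfolding bform_def by (simp add: eta_def)
qed

lemma bform_basis_l:
  assumes "d \<ge> 1" "k \<le> d"
  shows "bform d (basis_e k) x = eta d k * x k"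
proof -
  have "(\<Sum>j\<le>d. eta d j * basis_e k j * x j) = (\<Sum>j\<le>d. if j = k then eta d k * x k else 0)"
    by (rule sum.cong) (auto simp: basis_e_def)
  then show ?thesis using assms by (simp add: bform_expand)
qed

lemma bform_basis_r:
  assumes "d \<ge> 1" "k \<le> d"
  shows "bform d x (basis_e k) = eta d k * x k"
  using bform_basis_l[OF assms] bform_sym by metis



definition mmul :: "nat \<Rightarrow> (nat \<Rightarrow> nat \<Rightarrow> real) \<Rightarrow> (nat \<Rightarrow> nat \<Rightarrow> real) \<Rightarrow> (nat \<Rightarrow> nat \<Rightarrow> real)" where
  "mmul d A B = (\<lambda>i j. \<Sum>k\<le>d. A i k * B k j)"

lemma mapply_Evec: "M \<in> Emat d \<Longrightarrow> mapply d M x \<in> Evec d"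
  unfolding Emat_def Evec_def mapply_def by auto

lemma mapply_lin: "mapply d M (\<lambda>i. \<alpha> * x i + \<beta> * y i) = (\<lambda>i. \<alpha> * mapply d M x i + \<beta> * mapply d M y i)"
  unfolding mapply_def by (simp add: algebra_simps sum.distrib sum_distrib_left)

lemma mapply_zero[simp]: "mapply d M (\<lambda>i. 0) = (\<lambda>i. 0)"
  unfolding mapply_def by simp

lemma mmul_apply: "mapply d (mmul d A B) x = mapply d A (mapply d B x)"
proof (rule ext)
  fix i
  have "(\<Sum>j\<le>d. (\<Sum>k\<le>d. A i k * B k j) * x j) = (\<Sum>j\<le>d. \<Sum>k\<le>d. A i k * (B k j * x j))"
    by (simp add: sum_distrib_right mult.assoc)
  also have "\<dots> = (\<Sum>k\<le>d. \<Sum>j\<le>d. A i k * (B k j * x j))"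
    by (rule sum.swap)
  also have "\<dots> = (\<Sum>k\<le>d. A i k * (\<Sum>j\<le>d. B k j * x j))"
    by (simp add: sum_distrib_left)
  finally show "mapply d (mmul d A B) x i = mapply d A (mapply d B x) i"
    unfolding mapply_def mmul_def by simp
qed

lemma mmul_Emat: "A \<in> Emat d \<Longrightarrow> B \<in> Emat d \<Longrightarrow> mmul d A B \<in> Emat d"
  unfolding Emat_def mmul_def by auto

lemma idmat_apply: "x \<in> Evec d \<Longrightarrow> mapply d (idmat d) x = x"
  unfolding mapply_def idmat_def Evec_def
proof (rule ext)
  fix i assume "x \<in> {x. \<forall>i>d. x i = 0}"
  then show "(\<Sum>j\<le>d. (if i = j \<and> i \<le> d then 1 else 0) * x j) = x i"
  proof (cases "i \<le> d")
    case True
    have "(\<Sum>j\<le>d. (if i = j \<and> i \<le> d then 1 else 0) * x j) = (\<Sum>j\<le>d. if j = i then x i else 0)"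
      by (rule sum.cong) auto
    then show ?thesis using True by simp
  qed auto
qed

lemma idmat_Emat: "idmat d \<in> Emat d"
  unfolding Emat_def idmat_def by auto

lemma mmul_id: "A \<in> Emat d \<Longrightarrow> mmul d A (idmat d) = A"
  unfolding mmul_def idmat_def Emat_def
proof (intro ext)
  fix i j assume A: "A \<in> {M. \<forall>i j. d < i \<or> d < j \<longrightarrow> M i j = 0}"
  show "(\<Sum>k\<le>d. A i k * (if k = j \<and> k \<le> d then 1 else 0)) = A i j"
    using A by (cases "j \<le> d") (auto simp: if_distrib cong: if_cong)
qed

lemma idmat_Ogroup: "idmat d \<in> Ogroup d"
  unfolding Ogroup_def using idmat_Emat idmat_apply by auto

lemma Ogroup_mmul: "A \<in> Ogroup d \<Longrightarrow> B \<in> Ogroup d \<Longrightarrow> mmul d A B \<in> Ogroup d"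
  unfolding Ogroup_def using mmul_Emat mmul_apply mapply_Evec by auto

lemma Ogroup_inj:
  assumes "d \<ge> 1" "M \<in> Ogroup d" "x \<in> Evec d" "mapply d M x = (\<lambda>i. 0)"
  shows "x = (\<lambda>i. 0)"
proof (rule ext)
  fix k
  show "x k = 0"
  proof (cases "k \<le> d")
    case True
    have e: "basis_e k \<in> Evec d" using True unfolding Evec_def basis_e_def by auto
    have "bform d x (basis_e k) = bform d (mapply d M x) (mapply d M (basis_e k))"
      using assms e unfolding Ogroup_def by auto
    also have "\<dots> = 0" using assms(4) by simp
    finally have "eta d k * x k = 0" using bform_basis_r[OF assms(1) True] by simp
    then show ?thesis by (simp add: eta_def split: if_splits)
  next
    case False then show ?thesis using assms(3) unfolding Evec_def by auto
  qed
qed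

lemma G0_Ogroup: "G0 d \<subseteq> Ogroup d"
  unfolding G0_def by (rule connected_component_subset)

lemma idmat_G0: "idmat d \<in> G0 d"
  unfolding G0_def using idmat_Ogroup by simp

lemma G0_path:
  assumes "continuous_on {0..1::real} P" "P ` {0..1} \<subseteq> Ogroup d" "P 0 = idmat d"
  shows "P 1 \<in> G0 d"
proof -
  have "connected (P ` {0..1})"
    using assms(1) by (intro connected_continuous_image) auto
  moreover have "idmat d \<in> P ` {0..1}" using assms(3) by force
  ultimately have "P ` {0..1} \<subseteq> G0 d"
    unfolding G0_def using assms(2) connected_component_maximal by metis
  then show ?thesis by auto
qed

lemma cont_entry: "continuous_on UNIV (\<lambda>M::nat\<Rightarrow>nat\<Rightarrow>real. M k j)"
proof -
  have "continuous_on UNIV (\<lambda>f::nat\<Rightarrow>real. f j)" by simp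
  moreover have "continuous_on UNIV (\<lambda>M::nat\<Rightarrow>nat\<Rightarrow>real. M k)" by simp
  ultimately show ?thesis
    using continuous_on_compose2[of UNIV "\<lambda>f::nat\<Rightarrow>real. f j" UNIV "\<lambda>M::nat\<Rightarrow>nat\<Rightarrow>real. M k"] by auto
qed

lemma cont_mmul: "continuous_on UNIV (\<lambda>M. mmul d A M)"
  unfolding mmul_def
  by (intro continuous_on_coordinatewise_then_product continuous_on_sum continuous_on_mult
      continuous_on_const cont_entry)

lemma G0_mmul:
  assumes "A \<in> G0 d" "B \<in> G0 d"
  shows "mmul d A B \<in> G0 d"
proof -
  have AO: "A \<in> Ogroup d" using assms G0_Ogroup by auto
  then have AE: "A \<in> Emat d" unfolding Ogroup_def by auto
  let ?C = "connected_component_set (Ogroup d) (idmat d)"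
  have "connected ?C" by simp
  then have c: "connected ((\<lambda>M. mmul d A M) ` ?C)"
    by (rule connected_continuous_image[rotated]) (rule continuous_on_subset[OF cont_mmul], simp)
  have sub: "(\<lambda>M. mmul d A M) ` ?C \<subseteq> Ogroup d"
    using AO connected_component_subset Ogroup_mmul by blast
  have "A \<in> (\<lambda>M. mmul d A M) ` ?C"
  proof (rule image_eqI[where x="idmat d"])
    show "A = mmul d A (idmat d)" using mmul_id[OF AE] by simp
    show "idmat d \<in> ?C" using idmat_Ogroup by simp
  qed
  then have "(\<lambda>M. mmul d A M) ` ?C \<subseteq> connected_component_set (Ogroup d) A"
    using c sub connected_component_maximal by metis
  moreover have "connected_component_set (Ogroup d) A = ?C"
    using assms(1) unfolding G0_def by (metis connected_component_eq)
  ultimately show ?thesis using assms(2) unfolding G0_def by auto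
qed



definition upd2 :: "nat \<Rightarrow> (nat \<Rightarrow> real) \<Rightarrow> (nat \<Rightarrow> real) \<Rightarrow> (nat \<Rightarrow> real) \<Rightarrow> (nat \<Rightarrow> real) \<Rightarrow> (nat \<Rightarrow> nat \<Rightarrow> real)" where
  "upd2 d p1 q1 p2 q2 = (\<lambda>i j. if i \<le> d \<and> j \<le> d then (if i = j then 1 else 0) + eta d j * (p1 j * q1 i + p2 j * q2 i) else 0)"

lemma upd2_Emat: "upd2 d p1 q1 p2 q2 \<in> Emat d"
  unfolding Emat_def upd2_def by auto

lemma upd2_apply:
  assumes "d \<ge> 1" "x \<in> Evec d" "q1 \<in> Evec d" "q2 \<in> Evec d"
  shows "mapply d (upd2 d p1 q1 p2 q2) x = (\<lambda>i. x i + bform d p1 x * q1 i + bform d p2 x * q2 i)"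
proof (rule ext)
  fix i
  show "mapply d (upd2 d p1 q1 p2 q2) x i = x i + bform d p1 x * q1 i + bform d p2 x * q2 i"
  proof (cases "i \<le> d")
    case True
    have "mapply d (upd2 d p1 q1 p2 q2) x i = (\<Sum>j\<le>d. (if j = i then x i else 0)
         + q1 i * (eta d j * p1 j * x j) + q2 i * (eta d j * p2 j * x j))"
      unfolding mapply_def upd2_def using True by (intro sum.cong) (auto simp: algebra_simps)
    also have "\<dots> = x i + q1 i * bform d p1 x + q2 i * bform d p2 x"
      using True assms(1) by (simp add: sum.distrib sum_distrib_left[symmetric] bform_expand)
    finally show ?thesis by simp
  next
    case False
    then show ?thesis using assms unfolding Evec_def mapply_def upd2_def by auto
  qed
qed

lemma upd2_Ogroup:
  assumes "d \<ge> 1" "q1 \<in> Evec d" "q2 \<in> Evec d"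
    and "\<And>x y. x \<in> Evec d \<Longrightarrow> y \<in> Evec d \<Longrightarrow>
      bform d (\<lambda>i. x i + bform d p1 x * q1 i + bform d p2 x * q2 i)
              (\<lambda>i. y i + bform d p1 y * q1 i + bform d p2 y * q2 i) = bform d x y"
  shows "upd2 d p1 q1 p2 q2 \<in> Ogroup d"
  unfolding Ogroup_def using assms upd2_Emat upd2_apply by simp

lemma upd2_cont:
  assumes "\<And>j. continuous_on S (\<lambda>s. p1 s j)" "\<And>j. continuous_on S (\<lambda>s. q1 s j)"
    "\<And>j. continuous_on S (\<lambda>s. p2 s j)" "\<And>j. continuous_on S (\<lambda>s. q2 s j)"
  shows "continuous_on S (\<lambda>s. upd2 d (p1 s) (q1 s) (p2 s) (q2 s))"
proof (intro continuous_on_coordinatewise_then_product)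
  fix i j
  show "continuous_on S (\<lambda>s. upd2 d (p1 s) (q1 s) (p2 s) (q2 s) i j)"
    unfolding upd2_def
    by (cases "i \<le> d \<and> j \<le> d") (auto intro!: continuous_intros assms)
qed

lemma bform_expand3:
  "bform d (\<lambda>i. x i + a1 * w1 i + a2 * w2 i) (\<lambda>i. y i + b1 * w1 i + b2 * w2 i) =
   bform d x y + b1 * bform d x w1 + b2 * bform d x w2 + a1 * bform d w1 y + a1 * b1 * bform d w1 w1
   + a1 * b2 * bform d w1 w2 + a2 * bform d w2 y + a2 * b1 * bform d w2 w1 + a2 * b2 * bform d w2 w2"
  unfolding bform_def by (simp add: algebra_simps sum.distrib sum_distrib_left)

lemma alg_rot:
  fixes D q ux tx uy ty xy :: real
  assumes "D \<noteq> 0" "q \<noteq> 0"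
  shows "xy + ((-1/D) * (uy+ty)) * (ux+tx) + ((2/q)*uy)*tx + ((-1/D) * (ux+tx))*(uy+ty)
     + ((-1/D) * (ux+tx))*((-1/D) * (uy+ty))*(2*D) + ((-1/D) * (ux+tx))*((2/q)*uy)*D
     + ((2/q)*ux)*ty + ((2/q)*ux)*((-1/D) * (uy+ty))*D + ((2/q)*ux)*((2/q)*uy)*q = xy"
  using assms by (simp add: field_simps)

lemma rot_isom:
  assumes "bform d u u = q" "bform d t t = q" "q \<noteq> 0" "q + bform d u t \<noteq> 0"
  shows "bform d (\<lambda>i. x i + bform d (\<lambda>j. (-1/(q + bform d u t)) * (u j + t j)) x * (u i + t i) + bform d (\<lambda>j. (2/q) * u j) x * t i)
                 (\<lambda>i. y i + bform d (\<lambda>j. (-1/(q + bform d u t)) * (u j + t j)) y * (u i + t i) + bform d (\<lambda>j. (2/q) * u j) y * t i)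
         = bform d x y"
proof -
  define D where "D = q + bform d u t"
  have D: "D \<noteq> 0" using assms D_def by simp
  have ww: "bform d (\<lambda>i. u i + t i) (\<lambda>i. u i + t i) = 2 * D"
    using assms unfolding D_def by (simp add: bform_add_l bform_add_r bform_sym[of d t u])
  have wt: "bform d (\<lambda>i. u i + t i) t = D" "bform d t (\<lambda>i. u i + t i) = D"
    using assms unfolding D_def by (simp_all add: bform_add_l bform_add_r bform_sym[of d t u])
  have s1: "\<And>z. bform d (\<lambda>j. (-1/D) * (u j + t j)) z = (-1/D) * (bform d u z + bform d t z)"
    by (simp only: bform_scale_l bform_add_l)
  have s2: "\<And>z. bform d (\<lambda>j. (2/q) * u j) z = (2/q) * bform d u z"
    by (simp only: bform_scale_l)
  have f1: "bform d x (\<lambda>i. u i + t i) = bform d u x + bform d t x"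
    by (simp add: bform_add_r bform_sym)
  have f3: "bform d (\<lambda>i. u i + t i) y = bform d u y + bform d t y"
    by (simp add: bform_add_l)
  have f2: "bform d x t = bform d t x" by (rule bform_sym)
  show ?thesis
    unfolding D_def[symmetric]
    apply (subst bform_expand3)
    apply (simp only: s1 s2 ww wt f1 f2 f3 assms(2))
    by (rule alg_rot[OF D assms(3)])
qed

lemma nrot_isom:
  assumes "bform d n n = 0" "bform d n c = 0"
  shows "bform d (\<lambda>i. x i + bform d n x * (c i - (bform d c c / 2) * n i) + bform d (\<lambda>j. -1 * c j) x * n i)
                 (\<lambda>i. y i + bform d n y * (c i - (bform d c c / 2) * n i) + bform d (\<lambda>j. -1 * c j) y * n i)
         = bform d x y"
proof -
  have a: "bform d (\<lambda>i. c i - bform d c c / 2 * n i) (\<lambda>i. c i - bform d c c / 2 * n i) = bform d c c"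
    apply (simp only: bform_diff_l bform_diff_r bform_scale_l bform_scale_r)
    using assms by (simp add: bform_sym[of d c n])
  have b: "bform d (\<lambda>i. c i - bform d c c / 2 * n i) n = 0" "bform d n (\<lambda>i. c i - bform d c c / 2 * n i) = 0"
    apply (simp_all only: bform_diff_l bform_diff_r bform_scale_l bform_scale_r)
    using assms by (simp_all add: bform_sym[of d c n])
  have e: "\<And>z. bform d z (\<lambda>i. c i - bform d c c / 2 * n i) = bform d c z - bform d c c / 2 * bform d n z"
    "\<And>z. bform d (\<lambda>i. c i - bform d c c / 2 * n i) z = bform d c z - bform d c c / 2 * bform d n z"
    by (simp_all only: bform_diff_l bform_diff_r bform_scale_l bform_scale_r bform_sym)
  show ?thesis
    apply (subst bform_expand3)
    apply (simp only: a b e assms(1) bform_scale_l bform_sym[of d x n] bform_sym[of d n y])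
    using assms(2) by (simp add: algebra_simps bform_sym[of d c n])
qed



lemma Evec_lin: "x \<in> Evec d \<Longrightarrow> y \<in> Evec d \<Longrightarrow> (\<lambda>i. \<alpha> * x i + \<beta> * y i) \<in> Evec d"
  unfolding Evec_def by auto
lemma Evec_add: "x \<in> Evec d \<Longrightarrow> y \<in> Evec d \<Longrightarrow> (\<lambda>i. x i + y i) \<in> Evec d"
  unfolding Evec_def by auto
lemma Evec_diff: "x \<in> Evec d \<Longrightarrow> y \<in> Evec d \<Longrightarrow> (\<lambda>i. x i - y i) \<in> Evec d"
  unfolding Evec_def by auto
lemma Evec_scale: "x \<in> Evec d \<Longrightarrow> (\<lambda>i. c * x i) \<in> Evec d"
  unfolding Evec_def by auto
lemma basis_Evec: "k \<le> d \<Longrightarrow> basis_e k \<in> Evec d"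
  unfolding Evec_def basis_e_def by auto

lemma rot:
  assumes d: "d \<ge> 1" and uE: "u \<in> Evec d" and tE: "t \<in> Evec d"
    and uu: "bform d u u = q" and tt: "bform d t t = q" and q: "q \<noteq> 0" and ut: "0 \<le> q * bform d u t"
  shows "\<exists>M\<in>G0 d. \<forall>x\<in>Evec d. mapply d M x = (\<lambda>i. x i + bform d (\<lambda>j. (-1/(q + bform d u t)) * (u j + t j)) x * (u i + t i) + bform d (\<lambda>j. (2/q) * u j) x * t i)"
proof -
  define \<beta> where "\<beta> = bform d u t / q"
  have \<beta>0: "\<beta> \<ge> 0"
    using ut unfolding \<beta>_def by (simp add: zero_le_divide_iff zero_le_mult_iff) blast
  have B: "bform d u t = \<beta> * q" unfolding \<beta>_def using q by simp
  define lam where "lam s = sqrt ((1-s)^2 + s^2 + 2 * s * (1 - s) * \<beta>)" for s :: real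
  define ts where "ts s = (\<lambda>j. ((1-s)/lam s) * u j + (s/lam s) * t j)" for s
  define Dd where "Dd s = q + ((1-s)/lam s) * q + (s/lam s) * (\<beta> * q)" for s
  define P where "P s = upd2 d (\<lambda>j. (-1/Dd s) * (u j + ts s j)) (\<lambda>i. u i + ts s i) (\<lambda>j. (2/q) * u j) (ts s)" for s
  have arg: "(1-s)^2 + s^2 + 2 * s * (1 - s) * \<beta> \<ge> 1/2" if "s \<in> {0..1}" for s
  proof -
    have "2 * s * (1 - s) * \<beta> \<ge> 0" using that \<beta>0 by auto
    moreover have "(1-s)^2 + s^2 \<ge> 1/2"
    proof -
      have "(1-s)^2 + s^2 - 1/2 = (1 - 2 * s)^2/2" by (simp add: power2_eq_square algebra_simps)
      moreover have "(1 - 2 * s)^2/2 \<ge> 0" by simp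
      ultimately show ?thesis by linarith
    qed
    ultimately show ?thesis by linarith
  qed
  have lam_pos: "lam s > 0" if "s \<in> {0..1}" for s
    unfolding lam_def using arg[OF that] by simp
  have lam_sq: "(lam s)^2 = (1-s)^2 + s^2 + 2 * s * (1 - s) * \<beta>" if "s \<in> {0..1}" for s
    unfolding lam_def using arg[OF that] by simp
  have tsE: "ts s \<in> Evec d" for s unfolding ts_def using uE tE by (rule Evec_lin)
  have uts: "bform d u (ts s) = Dd s - q" for s
    unfolding ts_def Dd_def by (simp only: bform_lin_r uu B)
  have tsts: "bform d (ts s) (ts s) = q" if "s \<in> {0..1}" for s
  proof -
    have "bform d (ts s) (ts s) = ((1-s)/lam s)^2 * q + 2 * ((1-s)/lam s) * (s/lam s) * (\<beta> * q) + (s/lam s)^2 * q"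
      unfolding ts_def by (simp only: bform_lin_r bform_lin_l uu tt B bform_sym[of d t u])
        (use lam_pos[OF that] in \<open>simp add: field_simps power2_eq_square\<close>)
    also have "\<dots> = q * ((1-s)^2 + s^2 + 2 * s * (1 - s) * \<beta>) / (lam s)^2"
      using lam_pos[OF that] by (simp add: field_simps power2_eq_square)
    also have "\<dots> = q" using lam_sq[OF that] arg[OF that] by simp
    finally show ?thesis .
  qed
  have Dd_nz: "Dd s \<noteq> 0" if "s \<in> {0..1}" for s
  proof -
    have "Dd s = q * (1 + ((1-s) + s * \<beta>) / lam s)"
      unfolding Dd_def using lam_pos[OF that] by (simp add: field_simps)
    moreover have "((1-s) + s * \<beta>) / lam s \<ge> 0"
      using that \<beta>0 lam_pos[OF that] by (intro divide_nonneg_pos) auto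
    ultimately show ?thesis using q by (smt (verit) mult_eq_0_iff)
  qed
  have PO: "P s \<in> Ogroup d" if "s \<in> {0..1}" for s
  proof -
    have D: "Dd s = q + bform d u (ts s)" using uts by simp
    show ?thesis unfolding P_def D
      apply (rule upd2_Ogroup[OF d Evec_add[OF uE tsE] tsE])
      apply (rule rot_isom[OF uu tsts[OF that] q])
      using Dd_nz[OF that] D by simp
  qed
  have lam0: "lam 0 = 1" and lam1: "lam 1 = 1" unfolding lam_def by simp_all
  have ts0: "ts 0 = u" and ts1: "ts 1 = t" unfolding ts_def lam0 lam1 by simp_all
  have Dd0: "Dd 0 = 2 * q" and Dd1: "Dd 1 = q + bform d u t" unfolding Dd_def lam0 lam1 B by simp_all
  have P0: "P 0 = idmat d"
    unfolding P_def ts0 Dd0 upd2_def idmat_def using q by (intro ext) (simp add: field_simps)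
  have cont: "continuous_on {0..1} P"
  proof -
    have lam_c: "continuous_on {0..1} lam" unfolding lam_def by (intro continuous_intros)
    have lam_nz: "s \<in> {0..1} \<Longrightarrow> lam s \<noteq> 0" for s using lam_pos[of s] by simp
    have ts_c: "continuous_on {0..1} (\<lambda>s. ts s j)" for j
      unfolding ts_def using lam_nz by (auto intro!: continuous_intros lam_c)
    have Dd_c: "continuous_on {0..1} Dd"
      unfolding Dd_def using lam_nz by (auto intro!: continuous_intros lam_c)
    show ?thesis unfolding P_def
      apply (rule upd2_cont)
      using Dd_nz by (auto intro!: continuous_intros ts_c Dd_c)
  qed
  have "P 1 \<in> G0 d"
    by (rule G0_path[OF cont _ P0]) (use PO in auto)
  moreover have "\<forall>x\<in>Evec d. mapply d (P 1) x = (\<lambda>i. x i + bform d (\<lambda>j. (-1/(q + bform d u t)) * (u j + t j)) x * (u i + t i) + bform d (\<lambda>j. (2/q) * u j) x * t i)"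
    unfolding P_def ts1 Dd1 using upd2_apply[OF d _ Evec_add[OF uE tE] tE] by simp
  ultimately show ?thesis by blast
qed

lemma nrot:
  assumes d: "d \<ge> 1" and nE: "n \<in> Evec d" and cE: "c \<in> Evec d"
    and nn: "bform d n n = 0" and nc: "bform d n c = 0"
  shows "\<exists>M\<in>G0 d. \<forall>x\<in>Evec d. mapply d M x = (\<lambda>i. x i + bform d n x * (c i - (bform d c c / 2) * n i) + bform d (\<lambda>j. -1 * c j) x * n i)"
proof -
  define P where "P s = upd2 d n (\<lambda>i. s * c i - (s^2 * bform d c c / 2) * n i) (\<lambda>j. -1 * (s * c j)) n" for s :: real
  have PO: "P s \<in> Ogroup d" for s
  proof -
    have cc: "bform d (\<lambda>j. s * c j) (\<lambda>j. s * c j) = s^2 * bform d c c"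
      by (simp only: bform_scale_l bform_scale_r) (simp add: power2_eq_square)
    have nc': "bform d n (\<lambda>j. s * c j) = 0" using nc by (simp only: bform_scale_r)
    have q1: "(\<lambda>i. s * c i - (s^2 * bform d c c / 2) * n i) \<in> Evec d"
      using nE cE unfolding Evec_def by auto
    show ?thesis unfolding P_def
      apply (rule upd2_Ogroup[OF d q1 nE])
      using nrot_isom[OF nn nc', of _ _] unfolding cc by simp
  qed
  have P0: "P 0 = idmat d"
    unfolding P_def upd2_def idmat_def by (intro ext) simp
  have cont: "continuous_on {0..1} P"
    unfolding P_def by (rule upd2_cont) (auto intro!: continuous_intros)
  have "P 1 \<in> G0 d"
    by (rule G0_path[OF cont _ P0]) (use PO in auto)
  moreover have q1: "(\<lambda>i. c i - (bform d c c / 2) * n i) \<in> Evec d"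
    using nE cE unfolding Evec_def by auto
  ultimately show ?thesis
    unfolding P_def using upd2_apply[OF d _ q1 nE] by auto
qed



lemma rot_fix:
  assumes d: "d \<ge> 1" and uE: "u \<in> Evec d" and tE: "t \<in> Evec d"
    and uu: "bform d u u = q" and tt: "bform d t t = q" and q: "q \<noteq> 0" and ut: "0 \<le> q * bform d u t"
  shows "\<exists>M\<in>G0 d. mapply d M u = t \<and> (\<forall>x\<in>Evec d. bform d u x = 0 \<and> bform d t x = 0 \<longrightarrow> mapply d M x = x)"
proof -
  obtain M where M: "M \<in> G0 d" and Mx: "\<forall>x\<in>Evec d. mapply d M x = (\<lambda>i. x i + bform d (\<lambda>j. (-1/(q + bform d u t)) * (u j + t j)) x * (u i + t i) + bform d (\<lambda>j. (2/q) * u j) x * t i)"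
    using rot[OF assms] by blast
  have D: "q + bform d u t \<noteq> 0"
  proof
    assume "q + bform d u t = 0"
    then have "bform d u t = -q" by simp
    then have "q * bform d u t = - (q*q)" by simp
    moreover have "q * q > 0" using q by (metis linorder_neqE_linordered_idom mult_neg_neg mult_pos_pos)
    ultimately show False using ut by simp
  qed
  have "mapply d M u = t"
  proof -
    have "bform d (\<lambda>j. (-1/(q + bform d u t)) * (u j + t j)) u = (-1/(q + bform d u t)) * (q + bform d u t)"
      by (simp only: bform_scale_l bform_add_l uu bform_sym[of d t u])
    also have "\<dots> = -1" using D by simp
    finally have 1: "bform d (\<lambda>j. (-1/(q + bform d u t)) * (u j + t j)) u = -1" .
    have 2: "bform d (\<lambda>j. (2/q) * u j) u = 2" using q by (simp only: bform_scale_l uu; simp)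
    show ?thesis unfolding Mx[rule_format, OF uE] 1 2 by simp
  qed
  moreover have "mapply d M x = x" if "x \<in> Evec d" "bform d u x = 0" "bform d t x = 0" for x
  proof -
    have 1: "bform d (\<lambda>j. (-1/(q + bform d u t)) * (u j + t j)) x = 0"
      by (simp only: bform_scale_l bform_add_l that; simp)
    have 2: "bform d (\<lambda>j. (2/q) * u j) x = 0" by (simp only: bform_scale_l that; simp)
    show ?thesis unfolding Mx[rule_format, OF that(1)] 1 2 by simp
  qed
  ultimately show ?thesis using M by blast
qed

lemma rot_step:
  assumes d: "d \<ge> 1" and uE: "u \<in> Evec d" and tE: "t \<in> Evec d" and zE: "z \<in> Evec d"
    and uu: "bform d u u = q" and tt: "bform d t t = q" and q: "q \<noteq> 0" and ut: "0 \<le> q * bform d u t"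
    and uz: "bform d u z = 0" and tz: "bform d t z = 0"
  shows "\<exists>M\<in>G0 d. mapply d M (\<lambda>i. u i + z i) = (\<lambda>i. t i + z i) \<and> (\<forall>x\<in>Evec d. bform d u x = 0 \<and> bform d t x = 0 \<longrightarrow> mapply d M x = x)"
proof -
  obtain M where M: "M \<in> G0 d" "mapply d M u = t" "\<forall>x\<in>Evec d. bform d u x = 0 \<and> bform d t x = 0 \<longrightarrow> mapply d M x = x"
    using rot_fix[OF d uE tE uu tt q ut] by blast
  have "mapply d M (\<lambda>i. u i + z i) = mapply d M (\<lambda>i. 1 * u i + 1 * z i)" by simp
  also have "\<dots> = (\<lambda>i. t i + z i)" unfolding mapply_lin using M zE uz tz by simp
  finally show ?thesis using M by blast
qed

lemma boost:
  assumes d: "d \<ge> 1" and uE: "u \<in> Evec d" and vE: "v \<in> Evec d"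
    and uu: "bform d u u = 1" and vv: "bform d v v = -1" and uv: "bform d u v = 0" and r: "r > 0"
  shows "\<exists>M\<in>G0 d. mapply d M (\<lambda>i. u i + v i) = (\<lambda>i. r * (u i + v i)) \<and> (\<forall>x\<in>Evec d. bform d u x = 0 \<and> bform d v x = 0 \<longrightarrow> mapply d M x = x)"
proof -
  define c where "c = (r + 1/r)/2"
  define s where "s = (r - 1/r)/2"
  define t where "t = (\<lambda>i. c * u i + s * v i)"
  have c0: "c > 0" unfolding c_def using r by (simp add: add_pos_pos)
  have cs: "c * c - s * s = 1" unfolding c_def s_def using r by (simp add: field_simps power2_eq_square)
  have tE: "t \<in> Evec d" unfolding t_def using uE vE by (rule Evec_lin)
  have vu: "bform d v u = 0" using uv bform_sym by metis
  have ut: "bform d u t = c" unfolding t_def by (simp only: bform_lin_r uu uv; simp)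
  have tt: "bform d t t = 1" unfolding t_def
    by (simp only: bform_lin_r bform_lin_l uu uv vv vu) (use cs in simp)
  obtain M where M: "M \<in> G0 d" and Mx: "\<forall>x\<in>Evec d. mapply d M x = (\<lambda>i. x i + bform d (\<lambda>j. (-1/(1 + bform d u t)) * (u j + t j)) x * (u i + t i) + bform d (\<lambda>j. (2/1) * u j) x * t i)"
    using rot[OF d uE tE uu tt] ut c0 by auto
  have uvE: "(\<lambda>i. u i + v i) \<in> Evec d" using uE vE by (rule Evec_add)
  have b1: "bform d (\<lambda>j. (-1/(1 + bform d u t)) * (u j + t j)) (\<lambda>i. u i + v i) = (-1/(1+c)) * (1 + c - s)"
    unfolding ut t_def by (simp only: bform_scale_l bform_scale_r bform_add_l bform_add_r bform_lin_l bform_lin_r uu uv vv vu) (simp add: algebra_simps)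
  have b2: "bform d (\<lambda>j. (2/1) * u j) (\<lambda>i. u i + v i) = 2"
    by (simp only: bform_scale_l bform_add_r uu uv; simp)
  have "mapply d M (\<lambda>i. u i + v i) = (\<lambda>i. u i + v i + (-1/(1+c)) * (1 + c - s) * (u i + (c * u i + s * v i)) + 2 * (c * u i + s * v i))"
    unfolding Mx[rule_format, OF uvE] b1 b2 by (simp add: t_def)
  also have "\<dots> = (\<lambda>i. r * (u i + v i))"
  proof (rule ext)
    fix i
    have "r = c + s" unfolding c_def s_def by (simp add: field_simps)
    moreover have "1 + c \<noteq> 0" using c0 by simp
    ultimately show "u i + v i + (-1/(1+c)) * (1 + c - s) * (u i + (c * u i + s * v i)) + 2 * (c * u i + s * v i) = r * (u i + v i)"
      using cs by (simp add: field_simps) algebra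
  qed
  finally have 1: "mapply d M (\<lambda>i. u i + v i) = (\<lambda>i. r * (u i + v i))" .
  have 2: "mapply d M x = x" if "x \<in> Evec d" "bform d u x = 0" "bform d v x = 0" for x
  proof -
    have tx: "bform d t x = 0" unfolding t_def by (simp only: bform_lin_l that; simp)
    have a1: "bform d (\<lambda>j. (-1/(1 + bform d u t)) * (u j + t j)) x = 0"
      by (simp only: bform_scale_l bform_add_l that tx; simp)
    have a2: "bform d (\<lambda>j. (2/1) * u j) x = 0" by (simp only: bform_scale_l that; simp)
    show ?thesis unfolding Mx[rule_format, OF that(1)] a1 a2 by simp
  qed
  show ?thesis using M 1 2 by blast
qed



lemma eta_0[simp]: "eta d 0 = 1" unfolding eta_def by simp
lemma eta_d[simp]: "eta d d = 1" unfolding eta_def by simp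
lemma eta_mid: "1 \<le> k \<Longrightarrow> k < d \<Longrightarrow> eta d k = -1" unfolding eta_def by simp

lemma bform_e_r: "d \<ge> 1 \<Longrightarrow> k \<le> d \<Longrightarrow> bform d x (\<lambda>i. c * basis_e k i) = c * eta d k * x k"
proof -
  assume "d \<ge> 1" "k \<le> d"
  then have "bform d x (basis_e k) = eta d k * x k" by (rule bform_basis_r)
  moreover have "bform d x (\<lambda>i. c * basis_e k i) = c * bform d x (basis_e k)"
    by (rule bform_scale_r)
  ultimately show ?thesis by simp
qed

lemma mapply_scale: "mapply d M (\<lambda>i. c * x i) = (\<lambda>i. c * mapply d M x i)"
  unfolding mapply_def by (simp add: sum_distrib_left algebra_simps)

lemma mapply_add: "mapply d M (\<lambda>i. x i + y i) = (\<lambda>i. mapply d M x i + mapply d M y i)"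
  unfolding mapply_def by (simp add: sum.distrib algebra_simps)

lemma mapply_diff: "mapply d M (\<lambda>i. x i - y i) = (\<lambda>i. mapply d M x i - mapply d M y i)"
  unfolding mapply_def by (simp add: sum_subtractf algebra_simps)

definition reach :: "nat \<Rightarrow> (nat \<Rightarrow> real) \<Rightarrow> (nat \<Rightarrow> real) \<Rightarrow> bool" where
  "reach d y z = (\<exists>M\<in>G0 d. mapply d M y = z)"

lemma reach_trans: "reach d y z \<Longrightarrow> reach d z w \<Longrightarrow> reach d y w"
  unfolding reach_def using G0_mmul mmul_apply by metis

definition reach2 :: "nat \<Rightarrow> (nat \<Rightarrow> real) \<Rightarrow> (nat \<Rightarrow> real) \<Rightarrow> (nat \<Rightarrow> real) \<Rightarrow> (nat \<Rightarrow> real) \<Rightarrow> bool" where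
  "reach2 d y1 y2 z1 z2 = (\<exists>M\<in>G0 d. mapply d M y1 = z1 \<and> mapply d M y2 = z2)"

lemma reach2_trans: "reach2 d y1 y2 z1 z2 \<Longrightarrow> reach2 d z1 z2 w1 w2 \<Longrightarrow> reach2 d y1 y2 w1 w2"
  unfolding reach2_def using G0_mmul mmul_apply by metis

lemma sum_sq_zero:
  fixes f :: "nat \<Rightarrow> real"
  assumes "(\<Sum>j\<in>A. f j * f j) = 0" "finite A" "j \<in> A"
  shows "f j = 0"
proof -
  have "\<forall>j\<in>A. f j * f j = 0" using assms(1,2) by (subst sum_nonneg_eq_0_iff[symmetric]) auto
  then show ?thesis using assms(3) by simp
qed

lemma vec_zero:
  assumes "x \<in> Evec d" "\<And>i. i \<le> d \<Longrightarrow> x i = 0"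
  shows "x = (\<lambda>i. 0)"
proof (rule ext)
  fix i show "x i = 0"
    using assms unfolding Evec_def by (cases "i \<le> d") auto
qed

lemma dim_ge3:
  assumes d: "d \<ge> 1" and aE: "a \<in> Evec d" and bE: "b \<in> Evec d"
    and li: "\<forall>\<alpha> \<beta>. (\<lambda>i. \<alpha> * a i + \<beta> * b i) = (\<lambda>i. 0) \<longrightarrow> \<alpha> = 0 \<and> \<beta> = 0"
    and aa: "bform d a a = 0" and bb: "bform d b b = 0" and ab: "bform d a b = 0"
  shows "d \<ge> 3"
proof (rule ccontr)
  assume "\<not> d \<ge> 3"
  then have "d = 1 \<or> d = 2" using d by auto
  have anz: "a \<noteq> (\<lambda>i. 0)"
  proof
    assume "a = (\<lambda>i. 0)"
    then have "(\<lambda>i. 1 * a i + 0 * b i) = (\<lambda>i. 0)" by simp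
    from li[rule_format, OF this] show False by simp
  qed
  show False
  proof (cases "d = 1")
    case True
    then have "a 0 * a 0 + a 1 * a 1 = 0" using aa unfolding bform_def by simp
    then have "a 0 = 0" "a 1 = 0" by (simp_all add: add_nonneg_eq_0_iff)
    have "a = (\<lambda>i. 0)"
    proof (rule vec_zero[OF aE])
      fix i assume "i \<le> d" then have "i = 0 \<or> i = 1" using True by auto
      then show "a i = 0" using \<open>a 0 = 0\<close> \<open>a 1 = 0\<close> by auto
    qed
    then show False using anz by simp
  next
    case False
    then have d2: "d = 2" using \<open>d = 1 \<or> d = 2\<close> by simp
    have bf: "bform d x y = x 0 * y 0 + x 2 * y 2 - x 1 * y 1" for x y
    proof -
      have "{1..<2::nat} = {1}" by auto
      then show ?thesis unfolding bform_def d2 by simp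
    qed
    have a1: "a 1 \<noteq> 0"
    proof
      assume "a 1 = 0"
      then have "a 0 * a 0 + a 2 * a 2 = 0" using aa bf by simp
      then have "a 0 = 0" "a 2 = 0" by (simp_all add: add_nonneg_eq_0_iff)
      have "a = (\<lambda>i. 0)"
      proof (rule vec_zero[OF aE])
        fix i assume "i \<le> d" then have "i = 0 \<or> i = 1 \<or> i = 2" using d2 by auto
        then show "a i = 0" using \<open>a 0 = 0\<close> \<open>a 1 = 0\<close> \<open>a 2 = 0\<close> by auto
      qed
      then show False using anz by simp
    qed
    define lam where "lam = b 1 / a 1"
    define c where "c = (\<lambda>i. (-lam) * a i + 1 * b i)"
    have cc: "bform d c c = 0" unfolding c_def
      by (simp only: bform_lin_l bform_lin_r aa bb ab bform_sym[of d b a]; simp)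
    have c1: "c 1 = 0" unfolding c_def lam_def using a1 by simp
    then have "c 0 * c 0 + c 2 * c 2 = 0" using cc bf by simp
    then have "c 0 = 0" "c 2 = 0" by (simp_all add: add_nonneg_eq_0_iff)
    moreover have cE: "c \<in> Evec d" unfolding c_def using aE bE by (rule Evec_lin)
    ultimately have "c = (\<lambda>i. 0)"
    proof (intro vec_zero)
      fix i assume "i \<le> d" then have "i = 0 \<or> i = 1 \<or> i = 2" using d2 by auto
      then show "c i = 0" using \<open>c 0 = 0\<close> c1 \<open>c 2 = 0\<close> by auto
    qed
    then have "(\<lambda>i. (-lam) * a i + 1 * b i) = (\<lambda>i. 0)" unfolding c_def .
    from li[rule_format, OF this] show False by simp
  qed
qed



lemma rot_reach:
  assumes d: "d \<ge> 1" and uE: "u \<in> Evec d" and tE: "t \<in> Evec d" and zE: "z \<in> Evec d"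
    and uu: "bform d u u = q" and tt: "bform d t t = q" and q: "q \<noteq> 0" and ut: "0 \<le> q * bform d u t"
    and uz: "bform d u z = 0" and tz: "bform d t z = 0"
  shows "reach d (\<lambda>i. u i + z i) (\<lambda>i. t i + z i)"
  using rot_step[OF assms] unfolding reach_def by blast

lemma rot_reach2:
  assumes d: "d \<ge> 1" and uE: "u \<in> Evec d" and tE: "t \<in> Evec d" and zE: "z \<in> Evec d"
    and uu: "bform d u u = q" and tt: "bform d t t = q" and q: "q \<noteq> 0" and ut: "0 \<le> q * bform d u t"
    and uz: "bform d u z = 0" and tz: "bform d t z = 0"
    and wE: "w \<in> Evec d" and uw: "bform d u w = 0" and tw: "bform d t w = 0"
  shows "reach2 d w (\<lambda>i. u i + z i) w (\<lambda>i. t i + z i)"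
  using rot_step[OF assms(1-10)] wE uw tw unfolding reach2_def by blast

lemma stageA:
  assumes d3: "d \<ge> 3" and aE: "a \<in> Evec d" and aa: "bform d a a = 0" and anz: "a \<noteq> (\<lambda>i. 0)"
  shows "reach d a (\<lambda>i. basis_e 0 i + basis_e 1 i)"
proof -
  have d1: "d \<ge> 1" using d3 by simp
  have ed: "\<And>x c. bform d x (\<lambda>i. c * basis_e d i) = c * x d" using bform_e_r[OF d1 le_refl] by simp
  have e0: "\<And>x c. bform d x (\<lambda>i. c * basis_e 0 i) = c * x 0" using bform_e_r[OF d1, of 0] by simp
  have e1: "\<And>x c. bform d x (\<lambda>i. c * basis_e 1 i) = - c * x 1"
    using bform_e_r[OF d1, of 1] eta_mid[of 1 d] d3 by simp
  have e2: "\<And>x c. bform d x (\<lambda>i. c * basis_e 2 i) = - c * x 2"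
    using bform_e_r[OF d1, of 2] eta_mid[of 2 d] d3 by simp
  define S where "S = (\<Sum>j\<in>{1..<d}. a j * a j)"
  have aa': "a 0 * a 0 + a d * a d = S" using aa unfolding bform_def S_def by simp
  define r where "r = sqrt (a 0 * a 0 + a d * a d)"
  have nn0: "0 \<le> a 0 * a 0 + a d * a d" by simp
  have rr: "r * r = a 0 * a 0 + a d * a d" unfolding r_def using nn0 by (simp add: real_sqrt_mult_self)
  have r0: "r > 0"
  proof (rule ccontr)
    assume "\<not> r > 0"
    then have z: "a 0 * a 0 + a d * a d = 0" unfolding r_def using nn0 by simp
    then have a0: "a 0 = 0" "a d = 0" by (simp_all add: add_nonneg_eq_0_iff)
    have "S = 0" using z aa' by simp
    then have aj: "a j = 0" if "j \<in> {1..<d}" for j using sum_sq_zero[of a "{1..<d}" j] that unfolding S_def by simp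
    have "a = (\<lambda>i. 0)"
    proof (rule vec_zero[OF aE])
      fix i assume "i \<le> d"
      then consider "i = 0" | "i = d" | "i \<in> {1..<d}" by fastforce
      then show "a i = 0" using a0 aj by cases auto
    qed
    then show False using anz by simp
  qed
  define pa where "pa = (\<lambda>i. if i = 0 \<or> i = d then a i else 0)"
  define na where "na = (\<lambda>i. if 1 \<le> i \<and> i < d then a i else 0)"
  have paE: "pa \<in> Evec d" unfolding pa_def Evec_def by auto
  have naE: "na \<in> Evec d" unfolding na_def Evec_def by auto
  have asplit: "a = (\<lambda>i. pa i + na i)"
  proof (rule ext)
    fix i show "a i = pa i + na i"
      using aE d1 unfolding pa_def na_def Evec_def by auto
  qed
  have s0: "(\<Sum>j\<in>{1..<d}. pa j * pa j) = 0" by (rule sum.neutral) (auto simp: pa_def)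
  have s1: "(\<Sum>j\<in>{1..<d}. pa j * na j) = 0" by (rule sum.neutral) (auto simp: pa_def)
  have s2: "(\<Sum>j\<in>{1..<d}. na j * na j) = S" unfolding S_def by (rule sum.cong) (auto simp: na_def)
  have pp: "bform d pa pa = r * r" unfolding bform_def s0 rr by (simp add: pa_def)
  have nn: "bform d na na = -(r * r)" unfolding bform_def s2 rr aa' using d1 by (simp add: na_def)
  have pn: "bform d pa na = 0" unfolding bform_def s1 using d1 by (simp add: na_def)
  define \<sigma> where "\<sigma> = (if a d \<ge> 0 then 1 else -1 :: real)"
  have \<sigma>\<sigma>: "\<sigma> * \<sigma> = 1" unfolding \<sigma>_def by simp
  have \<sigma>a: "\<sigma> * a d \<ge> 0" unfolding \<sigma>_def by simp
  define \<tau> where "\<tau> = (if a 2 \<ge> 0 then 1 else -1 :: real)"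
  have \<tau>\<tau>: "\<tau> * \<tau> = 1" unfolding \<tau>_def by simp
  have \<tau>a: "\<tau> * a 2 \<ge> 0" unfolding \<tau>_def by simp
  define t1 where "t1 = (\<lambda>i. (\<sigma> * r) * basis_e d i)"
  define t0 where "t0 = (\<lambda>i. r * basis_e 0 i)"
  define t2 where "t2 = (\<lambda>i. (\<tau> * r) * basis_e 2 i)"
  define t3 where "t3 = (\<lambda>i. r * basis_e 1 i)"
  have t1E: "t1 \<in> Evec d" unfolding t1_def by (rule Evec_scale[OF basis_Evec]) simp
  have t0E: "t0 \<in> Evec d" unfolding t0_def by (rule Evec_scale[OF basis_Evec]) simp
  have t2E: "t2 \<in> Evec d" unfolding t2_def by (rule Evec_scale[OF basis_Evec]) (use d3 in simp)
  have t3E: "t3 \<in> Evec d" unfolding t3_def by (rule Evec_scale[OF basis_Evec]) (use d3 in simp)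
  have rq: "r * r \<noteq> 0" using r0 by simp
  have nd: "d \<noteq> 0" "d \<noteq> 1" "d \<noteq> 2" "(2::nat) \<noteq> 1" using d3 by auto
  have R1: "reach d (\<lambda>i. pa i + na i) (\<lambda>i. t1 i + na i)"
  proof (rule rot_reach[OF d1 paE t1E naE pp _ rq _ pn])
    show "bform d t1 t1 = r * r" unfolding t1_def
      by (simp only: ed) (simp add: basis_e_def \<sigma>\<sigma> algebra_simps)
    have "bform d pa t1 = \<sigma> * r * a d" unfolding t1_def by (simp only: ed) (simp add: pa_def)
    moreover have "0 \<le> (r*r*r)*(\<sigma> * a d)" by (rule mult_nonneg_nonneg) (use r0 \<sigma>a in auto)
    ultimately show "0 \<le> r * r * bform d pa t1" by (simp add: algebra_simps)
    show "bform d t1 na = 0" unfolding t1_def by (subst bform_sym, simp only: ed) (simp add: na_def)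
  qed
  have R2: "reach d (\<lambda>i. t1 i + na i) (\<lambda>i. t0 i + na i)"
  proof (rule rot_reach[OF d1 t1E t0E naE _ _ rq])
    show "bform d t1 t1 = r * r" unfolding t1_def
      by (simp only: ed) (simp add: basis_e_def \<sigma>\<sigma> algebra_simps)
    show "bform d t0 t0 = r * r" unfolding t0_def
      by (simp only: e0) (simp add: basis_e_def)
    show "0 \<le> r * r * bform d t1 t0" unfolding t0_def t1_def by (simp only: e0) (simp add: basis_e_def nd)
    show "bform d t1 na = 0" unfolding t1_def by (subst bform_sym, simp only: ed) (simp add: na_def)
    show "bform d t0 na = 0" unfolding t0_def by (subst bform_sym, simp only: e0) (simp add: na_def)
  qed
  have R3: "reach d (\<lambda>i. na i + t0 i) (\<lambda>i. t2 i + t0 i)"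
  proof (rule rot_reach[OF d1 naE t2E t0E nn])
    show "bform d t2 t2 = - (r * r)" unfolding t2_def
      by (simp only: e2) (simp add: basis_e_def \<tau>\<tau> algebra_simps)
    show "- (r * r) \<noteq> 0" using rq by simp
    have "bform d na t2 = - (\<tau> * r * a 2)" unfolding t2_def by (simp only: e2) (use d3 in \<open>simp add: na_def\<close>)
    moreover have "0 \<le> (r*r*r)*(\<tau> * a 2)" by (rule mult_nonneg_nonneg) (use r0 \<tau>a in auto)
    ultimately show "0 \<le> - (r * r) * bform d na t2" by (simp add: algebra_simps)
    show "bform d na t0 = 0" unfolding t0_def by (simp only: e0) (simp add: na_def)
    show "bform d t2 t0 = 0" unfolding t0_def t2_def by (simp only: e0) (simp add: basis_e_def nd)
  qed
  have R4: "reach d (\<lambda>i. t2 i + t0 i) (\<lambda>i. t3 i + t0 i)"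
  proof (rule rot_reach[OF d1 t2E t3E t0E])
    show "bform d t2 t2 = - (r * r)" unfolding t2_def
      by (simp only: e2) (simp add: basis_e_def \<tau>\<tau> algebra_simps)
    show "bform d t3 t3 = - (r * r)" unfolding t3_def
      by (simp only: e1) (simp add: basis_e_def)
    show "- (r * r) \<noteq> 0" using rq by simp
    show "0 \<le> - (r * r) * bform d t2 t3" unfolding t2_def t3_def by (simp only: e1) (simp add: basis_e_def nd)
    show "bform d t2 t0 = 0" unfolding t0_def t2_def by (simp only: e0) (simp add: basis_e_def nd)
    show "bform d t3 t0 = 0" unfolding t0_def t3_def by (simp only: e0) (simp add: basis_e_def nd)
  qed
  have R5: "reach d (\<lambda>i. t3 i + t0 i) (\<lambda>i. basis_e 0 i + basis_e 1 i)"
  proof -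
    have b0: "basis_e 0 \<in> Evec d" "basis_e 1 \<in> Evec d" using d1 by (auto intro: basis_Evec)
    have "bform d (basis_e 0) (basis_e 0) = 1" using bform_basis_r[OF d1, of 0] by (simp add: basis_e_def)
    moreover have "bform d (basis_e 1) (basis_e 1) = -1" using bform_basis_r[OF d1, of 1] eta_mid[of 1 d] d3
      by (simp add: basis_e_def)
    moreover have "bform d (basis_e 0) (basis_e 1) = 0" using bform_basis_r[OF d1, of 1] d3
      by (simp add: basis_e_def)
    moreover have "1/r > 0" using r0 by simp
    ultimately obtain M where M: "M \<in> G0 d" "mapply d M (\<lambda>i. basis_e 0 i + basis_e 1 i) = (\<lambda>i. (1/r) * (basis_e 0 i + basis_e 1 i))"
      using boost[OF d1 b0] by blast
    have "(\<lambda>i. t3 i + t0 i) = (\<lambda>i. r * (basis_e 0 i + basis_e 1 i))"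
      unfolding t3_def t0_def by (simp add: algebra_simps)
    then have "mapply d M (\<lambda>i. t3 i + t0 i) = (\<lambda>i. r * ((1/r) * (basis_e 0 i + basis_e 1 i)))"
      using M(2) by (simp only: mapply_scale)
    also have "\<dots> = (\<lambda>i. basis_e 0 i + basis_e 1 i)" using r0 by simp
    finally show ?thesis using M(1) unfolding reach_def by blast
  qed
  have c1: "(\<lambda>i. t0 i + na i) = (\<lambda>i. na i + t0 i)" by (simp add: add.commute)
  show ?thesis
    unfolding asplit
    using reach_trans[OF reach_trans[OF reach_trans[OF reach_trans[OF R1 R2[unfolded c1]] R3] R4] R5] .
qed



lemma stageB:
  assumes d3: "d \<ge> 3" and bE: "b \<in> Evec d"
    and bn: "bform d b (\<lambda>i. basis_e 0 i + basis_e 1 i) = 0" and bb: "bform d b b = 0"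
    and nm: "\<forall>\<beta>. b \<noteq> (\<lambda>i. \<beta> * (basis_e 0 i + basis_e 1 i))"
  shows "\<exists>M\<in>G0 d. mapply d M (\<lambda>i. basis_e 0 i + basis_e 1 i) = (\<lambda>i. basis_e 0 i + basis_e 1 i)
     \<and> (\<exists>s\<in>{-1, 1::real}. \<exists>\<epsilon>\<in>{-1, 1::real}. mapply d M b = (\<lambda>i. s * (\<epsilon> * basis_e (d - 1) i + basis_e d i)))"
proof -
  define n0 where "n0 = (\<lambda>i. basis_e 0 i + basis_e 1 i)"
  have d1: "d \<ge> 1" using d3 by simp
  have nd: "d \<noteq> 0" "d \<noteq> 1" "d - 1 \<noteq> 0" "d - 1 \<noteq> 1" "d - 1 \<noteq> d" "d - 1 \<le> d"
    "d - Suc 0 \<noteq> d" "d \<noteq> d - Suc 0" "Suc 0 \<noteq> d - Suc 0" "d - Suc 0 \<noteq> Suc 0" "0 \<noteq> d - Suc 0" "d - Suc 0 \<noteq> 0" "Suc 0 \<noteq> d" using d3 by auto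
  have ed: "\<And>x c. bform d x (\<lambda>i. c * basis_e d i) = c * x d" using bform_e_r[OF d1 le_refl] by simp
  have edm: "\<And>x c. bform d x (\<lambda>i. c * basis_e (d-1) i) = - c * x (d-1)"
    using bform_e_r[OF d1, of "d-1"] eta_mid[of "d-1" d] d3 by simp
  have n0E: "n0 \<in> Evec d" unfolding n0_def using d1 by (intro Evec_add basis_Evec) auto
  have bn0: "bform d x n0 = x 0 - x 1" for x
  proof -
    have "bform d x n0 = bform d x (basis_e 0) + bform d x (basis_e 1)" unfolding n0_def by (rule bform_add_r)
    then show ?thesis using bform_basis_r[OF d1, of 0 x] bform_basis_r[OF d1, of 1 x] eta_mid[of 1 d] d3 by simp
  qed
  have n0v: "n0 0 = 1" "n0 1 = 1" "n0 d = 0" "n0 (d-1) = 0" using nd unfolding n0_def basis_e_def by auto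
  have nn0: "bform d n0 n0 = 0" using bn0 n0v by simp
  define \<beta> where "\<beta> = b 0"
  have b1: "b 1 = \<beta>" using bn unfolding n0_def[symmetric] bn0 \<beta>_def by simp
  define v where "v = (\<lambda>i. b i - \<beta> * n0 i)"
  have vE: "v \<in> Evec d" unfolding v_def using bE n0E by (intro Evec_diff Evec_scale)
  have v01: "v 0 = 0" "v 1 = 0" unfolding v_def using n0v b1 \<beta>_def by auto
  have vdb: "v d = b d" unfolding v_def using n0v by simp
  have vv: "bform d v v = 0"
  proof -
    have "bform d v v = bform d b b - \<beta> * bform d n0 b - \<beta> * (bform d b n0 - \<beta> * bform d n0 n0)"
      unfolding v_def by (simp only: bform_diff_l bform_diff_r bform_scale_l bform_scale_r; simp add: algebra_simps bform_sym[of d n0 b])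
    then show ?thesis using bb bn unfolding n0_def[symmetric] using nn0 bform_sym[of d n0 b] by simp
  qed
  have vnz: "v \<noteq> (\<lambda>i. 0)"
  proof
    assume "v = (\<lambda>i. 0)"
    then have "b = (\<lambda>i. \<beta> * n0 i)" unfolding v_def by (metis eq_iff_diff_eq_0)
    then show False using nm unfolding n0_def by blast
  qed
  define V where "V = (\<Sum>j\<in>{1..<d}. v j * v j)"
  have vdV: "v d * v d = V" using vv v01 unfolding bform_def V_def by simp
  have vdnz: "v d \<noteq> 0"
  proof
    assume "v d = 0"
    then have "V = 0" using vdV by simp
    then have vj: "v j = 0" if "j \<in> {1..<d}" for j using sum_sq_zero[of v "{1..<d}" j] that unfolding V_def by simp
    have "v = (\<lambda>i. 0)"
    proof (rule vec_zero[OF vE])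
      fix i assume "i \<le> d"
      then consider "i = 0" | "i = d" | "i \<in> {1..<d}" by fastforce
      then show "v i = 0" using v01 vj \<open>v d = 0\<close> by cases auto
    qed
    then show False using vnz by simp
  qed
  define c where "c = (\<lambda>i. (\<beta> / v d) * basis_e d i)"
  have cE: "c \<in> Evec d" unfolding c_def by (rule Evec_scale[OF basis_Evec]) simp
  have nc: "bform d n0 c = 0" unfolding c_def by (simp only: ed) (simp add: n0v)
  obtain M1 where M1: "M1 \<in> G0 d" and M1x: "\<forall>x\<in>Evec d. mapply d M1 x = (\<lambda>i. x i + bform d n0 x * (c i - (bform d c c / 2) * n0 i) + bform d (\<lambda>j. -1 * c j) x * n0 i)"
    using nrot[OF d1 n0E cE nn0 nc] by blast
  have R1: "reach2 d n0 b n0 v"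
  proof -
    have "bform d (\<lambda>j. -1 * c j) n0 = 0"
      by (simp only: bform_scale_l) (simp add: bform_sym[of d c n0] nc)
    then have 1: "mapply d M1 n0 = n0" unfolding M1x[rule_format, OF n0E] nn0 by simp
    have cb: "bform d c b = \<beta>"
      unfolding c_def by (subst bform_sym, simp only: ed) (simp add: vdb[symmetric] vdnz)
    have "bform d (\<lambda>j. -1 * c j) b = - \<beta>"
      by (simp only: bform_scale_l cb; simp)
    moreover have "bform d n0 b = 0" using bn bform_sym unfolding n0_def by metis
    ultimately have 2: "mapply d M1 b = v" unfolding M1x[rule_format, OF bE] v_def by simp
    show ?thesis unfolding reach2_def using M1 1 2 by blast
  qed
  define w where "w = (\<lambda>i. if 2 \<le> i \<and> i < d then v i else 0)"
  define \<rho> where "\<rho> = \<bar>v d\<bar>"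
  define \<epsilon> where "\<epsilon> = (if v (d-1) \<ge> 0 then 1 else -1 :: real)"
  define t where "t = (\<lambda>i. (\<epsilon> * \<rho>) * basis_e (d-1) i)"
  define z where "z = (\<lambda>i. v d * basis_e d i)"
  have wE: "w \<in> Evec d" unfolding w_def Evec_def by auto
  have tE: "t \<in> Evec d" unfolding t_def by (rule Evec_scale[OF basis_Evec]) simp
  have zE: "z \<in> Evec d" unfolding z_def by (rule Evec_scale[OF basis_Evec]) simp
  have \<epsilon>\<epsilon>: "\<epsilon> * \<epsilon> = 1" unfolding \<epsilon>_def by simp
  have \<rho>\<rho>: "\<rho> * \<rho> = v d * v d" unfolding \<rho>_def by (simp add: abs_mult_self_eq)
  have \<rho>0: "\<rho> > 0" unfolding \<rho>_def using vdnz by simp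
  have vsplit: "v = (\<lambda>i. w i + z i)"
  proof (rule ext)
    fix i
    consider "i = 0" | "i = 1" | "2 \<le> i \<and> i < d" | "i = d" | "i > d" by linarith
    then show "v i = w i + z i"
      using v01 vE nd unfolding w_def z_def basis_e_def Evec_def by cases auto
  qed
  have sw: "(\<Sum>j\<in>{1..<d}. w j * w j) = V" unfolding V_def
  proof (rule sum.cong)
    fix j assume "j \<in> {1..<d}"
    then show "w j * w j = v j * v j" using v01 unfolding w_def by (cases "j = 1") auto
  qed simp
  have ww: "bform d w w = - (v d * v d)" unfolding bform_def sw vdV using nd by (simp add: w_def)
  have tt: "bform d t t = - (v d * v d)" unfolding t_def
    by (simp only: edm) (simp add: basis_e_def \<rho>\<rho>[symmetric] \<epsilon>\<epsilon> algebra_simps)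
  have qnz: "- (v d * v d) \<noteq> 0" using vdnz by simp
  have wt: "0 \<le> - (v d * v d) * bform d w t"
  proof -
    have "bform d w t = - (\<epsilon> * \<rho> * v (d-1))" unfolding t_def by (simp only: edm) (use d3 in \<open>simp add: w_def\<close>)
    moreover have "0 \<le> (v d * v d * \<rho>) * (\<epsilon> * v (d-1))"
      by (rule mult_nonneg_nonneg) (use \<rho>0 in \<open>auto simp: \<epsilon>_def\<close>)
    ultimately show ?thesis by (simp add: algebra_simps)
  qed
  have wz: "bform d w z = 0" unfolding z_def by (simp only: ed) (simp add: w_def)
  have tz: "bform d t z = 0" unfolding z_def by (simp only: ed) (use d3 in \<open>simp add: t_def basis_e_def nd\<close>)
  have wn: "bform d w n0 = 0" unfolding bn0 by (simp add: w_def)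
  have tn: "bform d t n0 = 0" unfolding bn0 by (use d3 in \<open>simp add: t_def basis_e_def nd\<close>)
  have R2: "reach2 d n0 (\<lambda>i. w i + z i) n0 (\<lambda>i. t i + z i)"
    by (rule rot_reach2[OF d1 wE tE zE ww tt qnz wt wz tz n0E wn tn])
  define \<epsilon>' where "\<epsilon>' = \<epsilon> * \<rho> / v d"
  have \<epsilon>'\<epsilon>': "\<epsilon>' * \<epsilon>' = 1" unfolding \<epsilon>'_def using \<epsilon>\<epsilon> \<rho>\<rho> vdnz by (simp add: field_simps)
  define u where "u = basis_e d"
  define y where "y = (\<lambda>i. \<epsilon>' * basis_e (d-1) i)"
  have uE: "u \<in> Evec d" unfolding u_def by (rule basis_Evec) simp
  have yE: "y \<in> Evec d" unfolding y_def by (rule Evec_scale[OF basis_Evec]) simp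
  have uu: "bform d u u = 1" unfolding u_def using bform_basis_r[OF d1 le_refl] by (simp add: basis_e_def)
  have yy: "bform d y y = -1" unfolding y_def by (simp only: edm) (simp add: basis_e_def \<epsilon>'\<epsilon>')
  have uy: "bform d u y = 0" unfolding y_def by (simp only: edm) (simp add: u_def basis_e_def nd)
  have ir: "1/\<rho> > 0" using \<rho>0 by simp
  obtain M3 where M3: "M3 \<in> G0 d" "mapply d M3 (\<lambda>i. u i + y i) = (\<lambda>i. (1/\<rho>) * (u i + y i))"
    and M3f: "\<forall>x\<in>Evec d. bform d u x = 0 \<and> bform d y x = 0 \<longrightarrow> mapply d M3 x = x"
    using boost[OF d1 uE yE uu yy uy ir] by blast
  have un: "bform d u n0 = 0" unfolding bn0 by (simp add: u_def basis_e_def nd)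
  have yn: "bform d y n0 = 0" unfolding bn0 by (simp add: y_def basis_e_def nd)
  have tz': "(\<lambda>i. t i + z i) = (\<lambda>i. v d * (u i + y i))"
  proof (rule ext)
    fix i
    have "v d * \<epsilon>' = \<epsilon> * \<rho>" unfolding \<epsilon>'_def using vdnz by simp
    then show "t i + z i = v d * (u i + y i)" unfolding t_def z_def u_def y_def
      by (simp add: algebra_simps)
  qed
  define s where "s = v d / \<rho>"
  have M3tz: "mapply d M3 (\<lambda>i. t i + z i) = (\<lambda>i. s * (\<epsilon>' * basis_e (d - 1) i + basis_e d i))"
  proof -
    have "mapply d M3 (\<lambda>i. t i + z i) = (\<lambda>i. v d * mapply d M3 (\<lambda>i. u i + y i) i)"
      unfolding tz' by (rule mapply_scale)
    also have "\<dots> = (\<lambda>i. v d * ((1/\<rho>) * (u i + y i)))" unfolding M3(2) ..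
    also have "\<dots> = (\<lambda>i. s * (\<epsilon>' * basis_e (d - 1) i + basis_e d i))"
      unfolding s_def u_def y_def by (simp add: algebra_simps)
    finally show ?thesis .
  qed
  have R3: "reach2 d n0 (\<lambda>i. t i + z i) n0 (\<lambda>i. s * (\<epsilon>' * basis_e (d - 1) i + basis_e d i))"
    unfolding reach2_def using M3 M3tz M3f n0E un yn by blast
  have s1: "s \<in> {-1, 1}" unfolding s_def \<rho>_def using vdnz by (cases "v d > 0") auto
  have e1: "\<epsilon>' \<in> {-1, 1}" unfolding \<epsilon>'_def \<rho>_def \<epsilon>_def using vdnz by (cases "v d > 0") auto
  have "reach2 d n0 b n0 (\<lambda>i. s * (\<epsilon>' * basis_e (d - 1) i + basis_e d i))"
    using reach2_trans[OF reach2_trans[OF R1[unfolded vsplit] R2] R3] .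
  then show ?thesis unfolding reach2_def n0_def[symmetric] using s1 e1 by blast
qed



lemma moreover_part:
  assumes d3: "d \<ge> 3" and LO: "L \<in> Ogroup d" and aE: "a \<in> Evec d" and bE: "b \<in> Evec d"
    and La: "mapply d L a = (\<lambda>i. basis_e 0 i + basis_e 1 i)"
    and Lb: "mapply d L b = (\<lambda>i. s * (\<epsilon> * basis_e (d - 1) i + basis_e d i))"
    and s: "s \<in> {-1, 1}" and e: "\<epsilon> \<in> {-1, 1}"
    and xE: "x \<in> Evec d" and xa: "bform d x a = 0" and xb: "bform d x b = 0" and xx: "bform d x x = 0"
  shows "\<exists>\<alpha> \<beta>. x = (\<lambda>i. \<alpha> * a i + \<beta> * b i)"
proof -
  have d1: "d \<ge> 1" using d3 by simp
  have nd: "d \<noteq> 0" "d \<noteq> 1" "d - 1 \<noteq> 0" "d - 1 \<noteq> 1" "d - 1 \<noteq> d" "d - 1 \<le> d"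
    "d - Suc 0 \<noteq> d" "d \<noteq> d - Suc 0" "Suc 0 \<noteq> d - Suc 0" "d - Suc 0 \<noteq> Suc 0" "0 \<noteq> d - Suc 0" "d - Suc 0 \<noteq> 0" "Suc 0 \<noteq> d" using d3 by auto
  have ed: "\<And>x c. bform d x (\<lambda>i. c * basis_e d i) = c * x d" using bform_e_r[OF d1 le_refl] by simp
  have edm: "\<And>x c. bform d x (\<lambda>i. c * basis_e (d-1) i) = - c * x (d-1)"
    using bform_e_r[OF d1, of "d-1"] eta_mid[of "d-1" d] d3 by simp
  have LE: "L \<in> Emat d" using LO unfolding Ogroup_def by auto
  have iso: "\<And>y z. y \<in> Evec d \<Longrightarrow> z \<in> Evec d \<Longrightarrow> bform d (mapply d L y) (mapply d L z) = bform d y z"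
    using LO unfolding Ogroup_def by auto
  define x' where "x' = mapply d L x"
  have x'E: "x' \<in> Evec d" unfolding x'_def using LE by (rule mapply_Evec)
  have ss: "s * s = 1" using s by auto
  have ee: "\<epsilon> * \<epsilon> = 1" using e by auto
  have "bform d x' (\<lambda>i. basis_e 0 i + basis_e 1 i) = 0" unfolding x'_def La[symmetric] using iso xE aE xa by simp
  then have "bform d x' (basis_e 0) + bform d x' (basis_e 1) = 0" by (simp only: bform_add_r)
  then have x01: "x' 0 = x' 1" using bform_basis_r[OF d1, of 0 x'] bform_basis_r[OF d1, of 1 x'] eta_mid[of 1 d] d3 by simp
  have "bform d x' (\<lambda>i. s * (\<epsilon> * basis_e (d - 1) i + basis_e d i)) = 0" unfolding x'_def Lb[symmetric] using iso xE bE xb by simp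
  then have "s * (bform d x' (\<lambda>i. \<epsilon> * basis_e (d - 1) i) + bform d x' (\<lambda>i. 1 * basis_e d i)) = 0"
    by (simp only: bform_scale_r bform_add_r) simp
  then have "s * (- \<epsilon> * x' (d-1) + x' d) = 0" by (simp only: edm ed) simp
  then have xd: "x' d = \<epsilon> * x' (d-1)" using s by auto
  have "bform d x' x' = 0" unfolding x'_def using iso xE xx by simp
  then have "x' 0 * x' 0 + x' d * x' d - (\<Sum>j\<in>{1..<d}. x' j * x' j) = 0" unfolding bform_def .
  moreover have "{1..<d} = insert 1 (insert (d-1) {2..<d-1})" using d3 by auto
  ultimately have "x' 0 * x' 0 + x' d * x' d - (x' 1 * x' 1 + (x' (d-1) * x' (d-1) + (\<Sum>j\<in>{2..<d-1}. x' j * x' j))) = 0"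
    using d3 by (simp add: sum.insert)
  moreover have "x' d * x' d = (\<epsilon> * \<epsilon>) * (x' (d-1) * x' (d-1))" unfolding xd by (simp add: algebra_simps)
  ultimately have S0: "(\<Sum>j\<in>{2..<d-1}. x' j * x' j) = 0" unfolding ee x01 by linarith
  have xmid: "x' j = 0" if "j \<in> {2..<d-1}" for j using sum_sq_zero[OF S0 _ that] by simp
  define \<alpha> where "\<alpha> = x' 0"
  define \<beta> where "\<beta> = x' (d-1) * \<epsilon> * s"
  have x'eq: "x' = (\<lambda>i. \<alpha> * (basis_e 0 i + basis_e 1 i) + \<beta> * (s * (\<epsilon> * basis_e (d - 1) i + basis_e d i)))"
  proof (rule ext)
    fix i
    have "i = 0 \<or> i = 1 \<or> (2 \<le> i \<and> i < d - 1) \<or> i = d - 1 \<or> i = d \<or> i > d" by arith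
    then consider "i = 0" | "i = 1" | "i \<in> {2..<d-1}" | "i = d - 1" | "i = d" | "i > d" by auto
    then show "x' i = \<alpha> * (basis_e 0 i + basis_e 1 i) + \<beta> * (s * (\<epsilon> * basis_e (d - 1) i + basis_e d i))"
    proof cases
      case 1 then show ?thesis unfolding \<alpha>_def basis_e_def using nd by simp
    next
      case 2 then show ?thesis unfolding \<alpha>_def basis_e_def using nd x01 by simp
    next
      case 3 then show ?thesis using xmid[OF 3] unfolding basis_e_def by auto
    next
      case 4
      have "\<beta> * (s * \<epsilon>) = x' (d-1) * (s * s) * (\<epsilon> * \<epsilon>)" unfolding \<beta>_def by (simp add: algebra_simps)
      then show ?thesis using 4 ss ee nd unfolding basis_e_def by simp
    next
      case 5
      have "\<beta> * s = \<epsilon> * x' (d-1) * (s * s)" unfolding \<beta>_def by (simp add: algebra_simps)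
      then show ?thesis using 5 ss xd nd unfolding basis_e_def by simp
    next
      case 6 then show ?thesis using x'E d3 unfolding Evec_def basis_e_def by auto
    qed
  qed
  define y where "y = (\<lambda>i. x i - (\<alpha> * a i + \<beta> * b i))"
  have yE: "y \<in> Evec d" unfolding y_def using xE aE bE unfolding Evec_def by auto
  have "mapply d L y = (\<lambda>i. x' i - (\<alpha> * mapply d L a i + \<beta> * mapply d L b i))"
    unfolding y_def mapply_diff mapply_lin x'_def ..
  also have "\<dots> = (\<lambda>i. 0)" unfolding La Lb by (subst x'eq) simp
  finally have "y = (\<lambda>i. 0)" using Ogroup_inj[OF d1 LO yE] by blast
  then have "x = (\<lambda>i. \<alpha> * a i + \<beta> * b i)" unfolding y_def by (metis eq_iff_diff_eq_0)
  then show ?thesis by blast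
qed

theorem lemma2:
  fixes d :: nat and a b :: "nat \<Rightarrow> real"
  assumes "d \<ge> 1"
    and "a \<in> Evec d" and "b \<in> Evec d"
    and "\<forall>\<alpha> \<beta>. (\<lambda>i. \<alpha> * a i + \<beta> * b i) = (\<lambda>i. 0) \<longrightarrow> \<alpha> = 0 \<and> \<beta> = 0"
    and "bform d a a = 0" and "bform d b b = 0" and "bform d a b = 0"
  shows "d + 1 \<ge> 4
    \<and> (\<exists>\<Lambda>\<in>G0 d. mapply d \<Lambda> a = (\<lambda>i. basis_e 0 i + basis_e 1 i)
         \<and> (\<exists>s\<in>{-1, 1::real}. \<exists>\<epsilon>\<in>{-1, 1::real}.
              mapply d \<Lambda> b = (\<lambda>i. s * (\<epsilon> * basis_e (d - 1) i + basis_e d i))))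
    \<and> (\<forall>x\<in>Evec d. bform d x a = 0 \<and> bform d x b = 0 \<and> bform d x x = 0
         \<longrightarrow> (\<exists>\<alpha> \<beta>. x = (\<lambda>i. \<alpha> * a i + \<beta> * b i)))"
proof -
  note d1 = assms(1) and aE = assms(2) and bE = assms(3) and li = assms(4)
    and aa = assms(5) and bb = assms(6) and ab = assms(7)
  have d3: "d \<ge> 3" by (rule dim_ge3[OF assms])
  have anz: "a \<noteq> (\<lambda>i. 0)"
  proof
    assume "a = (\<lambda>i. 0)"
    then have "(\<lambda>i. 1 * a i + 0 * b i) = (\<lambda>i. 0)" by simp
    from li[rule_format, OF this] show False by simp
  qed
  define n0 where "n0 = (\<lambda>i. basis_e 0 i + basis_e 1 i)"
  obtain MA where MA: "MA \<in> G0 d" "mapply d MA a = n0"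
    using stageA[OF d3 aE aa anz] unfolding reach_def n0_def by blast
  have MAO: "MA \<in> Ogroup d" using MA G0_Ogroup by auto
  have MAE: "MA \<in> Emat d" using MAO unfolding Ogroup_def by auto
  have iso: "\<And>y z. y \<in> Evec d \<Longrightarrow> z \<in> Evec d \<Longrightarrow> bform d (mapply d MA y) (mapply d MA z) = bform d y z"
    using MAO unfolding Ogroup_def by auto
  define b' where "b' = mapply d MA b"
  have b'E: "b' \<in> Evec d" unfolding b'_def using MAE by (rule mapply_Evec)
  have bn: "bform d b' n0 = 0" unfolding b'_def MA(2)[symmetric] using iso bE aE ab bform_sym by metis
  have bb': "bform d b' b' = 0" unfolding b'_def using iso bE bb by simp
  have nm: "\<forall>\<beta>. b' \<noteq> (\<lambda>i. \<beta> * n0 i)"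
  proof (intro allI notI)
    fix \<beta> assume h: "b' = (\<lambda>i. \<beta> * n0 i)"
    have "mapply d MA (\<lambda>i. 1 * b i + (-\<beta>) * a i) = (\<lambda>i. 1 * b' i + (-\<beta>) * n0 i)"
      unfolding mapply_lin b'_def MA(2) ..
    also have "\<dots> = (\<lambda>i. 0)" unfolding h by simp
    finally have "(\<lambda>i. 1 * b i + (-\<beta>) * a i) = (\<lambda>i. 0)"
      using Ogroup_inj[OF d1 MAO Evec_lin[OF bE aE]] by blast
    then have "(\<lambda>i. (-\<beta>) * a i + 1 * b i) = (\<lambda>i. 0)" by (simp add: add.commute)
    from li[rule_format, OF this] show False by simp
  qed
  obtain MB s \<epsilon> where MB: "MB \<in> G0 d" "mapply d MB n0 = n0" and s: "s \<in> {-1, 1::real}" and e: "\<epsilon> \<in> {-1, 1::real}"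
    and MBb: "mapply d MB b' = (\<lambda>i. s * (\<epsilon> * basis_e (d - 1) i + basis_e d i))"
    using stageB[OF d3 b'E bn[unfolded n0_def] bb' nm[unfolded n0_def]] unfolding n0_def[symmetric] by blast
  define L where "L = mmul d MB MA"
  have LG: "L \<in> G0 d" unfolding L_def using G0_mmul MB(1) MA(1) by blast
  have La: "mapply d L a = n0" unfolding L_def mmul_apply MA(2) MB(2) ..
  have Lb: "mapply d L b = (\<lambda>i. s * (\<epsilon> * basis_e (d - 1) i + basis_e d i))"
    unfolding L_def mmul_apply b'_def[symmetric] MBb ..
  have LO: "L \<in> Ogroup d" using LG G0_Ogroup by auto
  have part3: "\<forall>x\<in>Evec d. bform d x a = 0 \<and> bform d x b = 0 \<and> bform d x x = 0
         \<longrightarrow> (\<exists>\<alpha> \<beta>. x = (\<lambda>i. \<alpha> * a i + \<beta> * b i))"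
    using moreover_part[OF d3 LO aE bE La[unfolded n0_def] Lb s e] by blast
  show ?thesis using d3 LG La Lb s e part3 unfolding n0_def by auto
qed

end
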